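(* Let $f:\mathbb{R}^d\to\mathbb{R}$ be convex and $M$-Lipschitz with $X^*\neq\emptyset$, satisfying $f(x)-f^*\ge\mu\,\mathrm{dist}(x,X^* )^p$ for all $x$, for some $\mu>0$, $p\ge1$. Run the Proximal Bundle Method with $\beta\in(0,1)$ and stepsizes $\rho_k=\mu^{2/p}(f(x_k)-f^* )^{1-2/p}$. Then for any $0<\epsilon\le f(x_0)-f^*$, the number of descent steps taken before an $\epsilon$-minimizer is found is at most $$\left\lceil\frac{2\log\left(\frac{f(x_0)-f^*}{\epsilon}\right)}{\beta}\right\rceil,$$ and the number of null steps taken before then is at most $$\begin{cases}\left(\dfrac{1}{1-(1-\beta/2)^{2-2/p}}\right)\dfrac{8M^2}{(1-\beta)^2\mu^{2/p}\epsilon^{2-2/p}} & p>1,\\[2mm] \dfrac{8M^2}{(1-\beta)^2\mu^2}\left\lceil\dfrac{2\log\left(\frac{f(x_0)-f^*}{\epsilon}\right)}{\beta}\right\rceil & p=1.\end{cases}$$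
   Context: Throughout, $f:\mathbb{R}^d\to\mathbb{R}$ is a proper closed convex function attaining its minimum $f^*=\inf f$ on the nonempty set $X^*=\{x: f(x)=f^*\}$; $\mathrm{dist}(x,S)=\inf_{y\in S}\|x-y\|$; $\partial f(x)$ is the convex subdifferential. A subgradient oracle returns, for any $x$, the value $f(x)$ and some $g(x)\in\partial f(x)$. Proximal Bundle Method: fix $\beta\in(0,1)$, $x_0=z_0\in\mathbb{R}^d$, $g_0=g(x_0)$, and the initial model $f_0(x)=f(x_0)+\langle g_0,x-x_0\rangle$. At iteration $k\ge0$, given a convex model $f_k:\mathbb{R}^d\to\mathbb{R}$ and stepsize $\rho_k>0$, compute $z_{k+1}=\operatorname{argmin}_z f_k(z)+\frac{\rho_k}{2}\|z-x_k\|^2$. If $\beta(f(x_k)-f_k(z_{k+1}))\le f(x_k)-f(z_{k+1})$, iteration $k$ is a descent step and $x_{k+1}=z_{k+1}$; otherwise it is a null step and $x_{k+1}=x_k$. Then a new convex model $f_{k+1}$ and stepsize $\rho_{k+1}$ are chosen satisfying, with $g_{k+1}=g(z_{k+1})$ and $s_{k+1}=\rho_k(x_k-z_{k+1})$: (1) $f_{k+1}(x)\le f(x)$ for all $x$; (2) $f_{k+1}(x)\ge f(z_{k+1})+\langle g_{k+1},x-z_{k+1}\rangle$ for all $x$; (3) if iteration $k$ was a null step, $f_{k+1}(x)\ge f_k(z_{k+1})+\langle s_{k+1},x-z_{k+1}\rangle$ for all $x$; (4) if iteration $k$ was a null step, $\rho_{k+1}\ge\rho_k$. An $\epsilon$-minimizer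 is a point $x$ with $f(x)-f^*\le\epsilon$. *)

theory Defs
  imports "HOL-Analysis.Analysis"
begin

definition is_subgradient :: "('a::real_inner \<Rightarrow> real) \<Rightarrow> 'a \<Rightarrow> 'a \<Rightarrow> bool" where
  "is_subgradient f x g \<longleftrightarrow> (\<forall>y. f y \<ge> f x + inner g (y - x))"

definition pbm_descent :: "real \<Rightarrow> ('a \<Rightarrow> real) \<Rightarrow> (nat \<Rightarrow> 'a \<Rightarrow> real) \<Rightarrow> (nat \<Rightarrow> 'a) \<Rightarrow> (nat \<Rightarrow> 'a) \<Rightarrow> nat \<Rightarrow> bool" where
  "pbm_descent \<beta> f fm x z k \<longleftrightarrow> \<beta> * (f (x k) - fm k (z (Suc k))) \<le> f (x k) - f (z (Suc k))"

end

theory Submission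
  imports Defs
begin

lemma norm_add_sq: "(norm (a + b))\<^sup>2 = (norm a)\<^sup>2 + 2 * inner a b + (norm (b::'a::real_inner))\<^sup>2"
  by (simp add: power2_norm_eq_inner inner_add_left inner_add_right inner_commute)

lemma sq_lemma:
  fixes h e :: "'a::real_inner"
  assumes "(r::real) > 0"
  shows "a * inner h e + r / 2 * (norm e)\<^sup>2 \<ge> - (a^2 * (norm h)\<^sup>2 / (2 * r))"
proof -
  have "0 \<le> (norm (r *\<^sub>R e + a *\<^sub>R h))\<^sup>2" by simp
  also have "\<dots> = r^2 * (norm e)\<^sup>2 + 2 * a * r * inner h e + a^2 * (norm h)\<^sup>2"
    by (simp add: norm_add_sq inner_commute power_mult_distrib algebra_simps)
  finally have "0 \<le> (r^2 * (norm e)\<^sup>2 + 2 * a * r * inner h e + a^2 * (norm h)\<^sup>2) / (2 * r)"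
    using assms by simp
  also have "\<dots> = a * inner h e + r / 2 * (norm e)\<^sup>2 + a^2 * (norm h)\<^sup>2 / (2 * r)"
    using assms by (simp add: field_simps power2_eq_square)
  finally show ?thesis by simp
qed

lemma norm_add_sq_le: "(norm (a + b))\<^sup>2 \<le> 2 * (norm a)\<^sup>2 + 2 * (norm (b::'a::real_inner))\<^sup>2"
proof -
  have "0 \<le> (norm (a - b))\<^sup>2" by simp
  also have "(norm (a - b))\<^sup>2 = (norm a)\<^sup>2 - 2 * inner a b + (norm b)\<^sup>2"
    using norm_add_sq[of a "-b"] by simp
  finally show ?thesis using norm_add_sq[of a b] by simp
qed

lemma arith_null:
  fixes rr M b GG R N :: real
  assumes "rr > 0" "M > 0" "0 < b" "b < 1" "GG \<ge> 0" "rr * GG \<le> M^2 / 2" "R \<ge> 0"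
    "N \<ge> (1 - b) * (GG + rr / 2 * R)" "a = (1 - b) * GG * rr / (2 * M^2)"
  shows "a * N - a^2 * M^2 / rr - a^2 * rr * R \<ge> (1 - b)^2 * GG^2 * rr / (4 * M^2)"
proof -
  have a0: "a \<ge> 0" using assms by simp
  have q: "GG * rr / (2 * M^2) \<le> 1 / 4" using assms by (simp add: field_simps)
  have "a = (1 - b) * (GG * rr / (2 * M^2))" using assms by simp
  also have "\<dots> \<le> (1 - b) * (1/4)" using q assms by (intro mult_left_mono) auto
  finally have "a \<le> (1 - b) / 4" by simp
  then have a1: "a \<le> (1 - b) / 2" using assms(4) by simp
  have "a * N \<ge> a * ((1 - b) * (GG + rr / 2 * R))" using assms(8) a0 by (rule mult_left_mono)
  then have h1: "a * N \<ge> a * (1 - b) * GG + a * (1 - b) * rr * R / 2" by (simp add: algebra_simps)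
  have "a * rr * R * ((1 - b) / 2 - a) \<ge> 0" using a0 a1 assms by simp
  then have h2: "a * (1 - b) * rr * R / 2 - a^2 * rr * R \<ge> 0" by (simp add: algebra_simps power2_eq_square)
  have h3: "a * (1 - b) * GG - a^2 * M^2 / rr = (1 - b)^2 * GG^2 * rr / (4 * M^2)"
    using assms(1,2) unfolding assms(9) by (simp add: field_simps power2_eq_square)
  from h1 h2 h3 show ?thesis by linarith
qed

lemma comb_lemma:
  fixes F fmz r I1 I2 a S H M E Dd W fz :: real
  assumes agg: "F \<ge> fmz - r * I2" and cut: "F \<ge> fz + I1" and a: "0 \<le> a" "a \<le> 1"
    and r: "r > 0" and S: "S = a * (I1 + r * I2) + r / 2 * E" and Sb: "S \<ge> - (a^2 * H / (2 * r))"
    and H: "H \<le> 2 * M^2 + 2 * r^2 * Dd" and W: "W = E + 2 * I2 + Dd"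
  shows "F + r / 2 * W \<ge> fmz + r / 2 * Dd + a * (fz - fmz) - a^2 * M^2 / r - a^2 * r * Dd"
proof -
  have c1: "(1 - a) * F \<ge> (1 - a) * (fmz - r * I2)" using agg a by (intro mult_left_mono) auto
  have c2: "a * F \<ge> a * (fz + I1)" using cut a by (intro mult_left_mono) auto
  have "F = (1 - a) * F + a * F" by (simp add: algebra_simps)
  then have c3: "F \<ge> (1 - a) * (fmz - r * I2) + a * (fz + I1)" using c1 c2 by linarith
  have c4: "(1 - a) * (fmz - r * I2) + a * (fz + I1) + r / 2 * W = fmz + a * (fz - fmz) + r / 2 * Dd + S"
    unfolding W S by (simp add: algebra_simps)
  have c5: "a^2 * H / (2 * r) \<le> a^2 * (2 * M^2 + 2 * r^2 * Dd) / (2 * r)"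
    using H r by (intro divide_right_mono mult_left_mono) auto
  have c6: "a^2 * (2 * M^2 + 2 * r^2 * Dd) / (2 * r) = a^2 * M^2 / r + a^2 * r * Dd"
    using r by (simp add: field_simps power2_eq_square)
  show ?thesis using c3 c4 c5 c6 Sb by linarith
qed

lemma recip_step:
  fixes G G' c :: real
  assumes "0 < G" "0 < c" "0 < G'" "G' \<le> G - c * G^2"
  shows "1 / (c * G') \<ge> 1 / (c * G) + 1"
proof -
  define X where "X = G - c * G^2"
  have Xp: "X > 0" using assms unfolding X_def by simp
  have "1 / (c * G') \<ge> 1 / (c * X)"
    using assms Xp unfolding X_def by (intro divide_left_mono mult_left_mono mult_pos_pos) auto
  moreover have "1 / (c * X) = 1 / (c * G) + 1 + c * G^2 / X"
    using assms Xp unfolding X_def by (simp add: field_simps power2_eq_square)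
  moreover have "c * G^2 / X \<ge> 0" using assms Xp by simp
  ultimately show ?thesis by linarith
qed

lemma card_Suc_filter:
  "card {k. k < Suc N \<and> P k} = card {k. k < N \<and> P k} + (if P N then 1 else 0)"
proof -
  have fin: "finite {k. k < N \<and> P k}" by simp
  show ?thesis
  proof (cases "P N")
    case True
    then have "{k. k < Suc N \<and> P k} = insert N {k. k < N \<and> P k}" by auto
    then show ?thesis using True fin by simp
  next
    case False
    then have "{k. k < Suc N \<and> P k} = {k. k < N \<and> P k}" using less_Suc_eq by auto
    then show ?thesis using False by simp
  qed
qed

locale pbm =
  fixes f :: "'a::euclidean_space \<Rightarrow> real"
    and g :: "'a \<Rightarrow> 'a"
    and fstar M \<mu> p \<beta> \<epsilon> :: real
    and x z :: "nat \<Rightarrow> 'a"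
    and fm :: "nat \<Rightarrow> 'a \<Rightarrow> real"
    and \<rho> :: "nat \<Rightarrow> real"
  assumes lipschitz: "\<forall>u v. \<bar>f u - f v\<bar> \<le> M * norm (u - v)"
    and fstar_lb: "\<forall>u. fstar \<le> f u"
    and Xstar_ne: "\<exists>u. f u = fstar"
    and mu_pos: "\<mu> > 0" and p_ge: "p \<ge> 1"
    and growth: "\<forall>u. f u - fstar \<ge> \<mu> * (infdist u {v. f v = fstar}) powr p"
    and subgrad_oracle: "\<forall>u. is_subgradient f u (g u)"
    and beta: "0 < \<beta>" "\<beta> < 1"
    and fm0: "\<forall>u. fm 0 u = f (x 0) + inner (g (x 0)) (u - x 0)"
    and rho_def: "\<forall>k. \<rho> k = \<mu> powr (2 / p) * (f (x k) - fstar) powr (1 - 2 / p)"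
    and prox_step: "\<forall>k. f (x k) - fstar > \<epsilon> \<longrightarrow>
        (\<forall>u. fm k (z (Suc k)) + \<rho> k / 2 * (norm (z (Suc k) - x k))\<^sup>2
              \<le> fm k u + \<rho> k / 2 * (norm (u - x k))\<^sup>2)"
    and descent_update: "\<forall>k. f (x k) - fstar > \<epsilon> \<longrightarrow> pbm_descent \<beta> f fm x z k \<longrightarrow> x (Suc k) = z (Suc k)"
    and null_update: "\<forall>k. f (x k) - fstar > \<epsilon> \<longrightarrow> \<not> pbm_descent \<beta> f fm x z k \<longrightarrow> x (Suc k) = x k"
    and model_below: "\<forall>k. f (x k) - fstar > \<epsilon> \<longrightarrow> (\<forall>u. fm (Suc k) u \<le> f u)"
    and model_cut: "\<forall>k. f (x k) - fstar > \<epsilon> \<longrightarrow>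
        (\<forall>u. fm (Suc k) u \<ge> f (z (Suc k)) + inner (g (z (Suc k))) (u - z (Suc k)))"
    and model_agg: "\<forall>k. f (x k) - fstar > \<epsilon> \<longrightarrow> \<not> pbm_descent \<beta> f fm x z k \<longrightarrow>
        (\<forall>u. fm (Suc k) u \<ge> fm k (z (Suc k)) + inner (\<rho> k *\<^sub>R (x k - z (Suc k))) (u - z (Suc k)))"
    and eps: "0 < \<epsilon>" "\<epsilon> \<le> f (x 0) - fstar"
begin

abbreviation "D \<equiv> pbm_descent \<beta> f fm x z"
definition "Dl k = f (x k) - fstar"
definition "good k \<longleftrightarrow> Dl k > \<epsilon>"
definition "G k = f (x k) - (fm k (z (Suc k)) + \<rho> k / 2 * (norm (z (Suc k) - x k))\<^sup>2)"

lemma M_nonneg: "0 \<le> M"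
proof -
  have "\<bar>f One - f 0\<bar> \<le> M * norm (One::'a)"
    using lipschitz[rule_format, of "One" "0::'a"] by simp
  then have "0 \<le> M * norm (One::'a)" by (rule order_trans[OF abs_ge_zero])
  moreover have "norm (One::'a) > 0" by simp
  ultimately show ?thesis by (simp add: zero_le_mult_iff)
qed

lemma g_norm: "norm (g u) \<le> M"
proof (cases "g u = 0")
  case True
  then show ?thesis using M_nonneg by simp
next
  case False
  have "f (u + g u) \<ge> f u + inner (g u) (g u)"
    using subgrad_oracle unfolding is_subgradient_def by (metis add_diff_cancel_left')
  moreover have "f (u + g u) - f u \<le> M * norm (g u)"
    using lipschitz[rule_format, of "u + g u" u] by simp
  ultimately have "norm (g u) * norm (g u) \<le> M * norm (g u)"
    by (simp add: power2_norm_eq_inner[symmetric] power2_eq_square)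
  then show ?thesis using False by (simp add: mult_le_cancel_right)
qed

lemma M_pos: "M > 0"
proof -
  have "M \<noteq> 0"
  proof
    assume "M = 0"
    obtain u where u: "f u = fstar" using Xstar_ne by auto
    have "f (x 0) = f u" using lipschitz[rule_format, of "x 0" u] \<open>M = 0\<close> by simp
    then show False using eps u by simp
  qed
  then show ?thesis using M_nonneg by simp
qed

lemma cont_f: "continuous_on UNIV f"
proof (rule continuous_onI)
  fix u and e :: real assume e: "0 < e"
  have "\<forall>x'\<in>UNIV. dist x' u < e / M \<longrightarrow> dist (f x') (f u) \<le> e"
  proof (intro ballI impI)
    fix x' assume "dist x' u < e / M"
    then have "M * norm (x' - u) \<le> e" using M_pos by (simp add: dist_norm field_simps)
    then show "dist (f x') (f u) \<le> e" using lipschitz[rule_format, of x' u] by (simp add: dist_real_def)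
  qed
  then show "\<exists>d>0. \<forall>x'\<in>UNIV. dist x' u < d \<longrightarrow> dist (f x') (f u) \<le> e"
    using e M_pos by (intro exI[of _ "e / M"]) simp
qed

lemma Dl_pos: "good k \<Longrightarrow> Dl k > 0"
  using eps unfolding good_def by simp

lemma rho_pos: "good k \<Longrightarrow> \<rho> k > 0"
  using Dl_pos[of k] mu_pos rho_def unfolding Dl_def by simp

lemma rho_Dl: "good k \<Longrightarrow> \<rho> k * Dl k = \<mu> powr (2/p) * Dl k powr (2 - 2/p)"
proof -
  assume "good k"
  then have "Dl k > 0" by (rule Dl_pos)
  have "\<rho> k * Dl k = \<mu> powr (2/p) * (Dl k powr (1 - 2/p) * Dl k powr 1)"
    using rho_def \<open>Dl k > 0\<close> powr_one[of "Dl k"] unfolding Dl_def by simp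
  also have "\<dots> = \<mu> powr (2/p) * Dl k powr (2 - 2/p)"
  proof -
    have e: "(1 - 2/p) + 1 = 2 - 2/p" by simp
    show ?thesis by (metis powr_add e)
  qed
  finally show ?thesis .
qed

lemma fm_below: "(\<forall>j\<le>k. good j) \<Longrightarrow> fm k u \<le> f u"
proof (cases k)
  case 0
  then show ?thesis using fm0 subgrad_oracle unfolding is_subgradient_def by simp
next
  case (Suc j)
  assume "\<forall>j\<le>k. good j"
  then have "good j" using Suc by simp
  then show ?thesis using model_below Suc unfolding good_def Dl_def by simp
qed

lemma gap:
  assumes gk: "good k" and below: "\<forall>u. fm k u \<le> f u"
  shows "G k \<ge> Dl k / 2"
proof -
  define X where "X = {v. f v = fstar}"
  have "closed X" unfolding X_def by (rule closed_Collect_eq[OF cont_f]) simp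
  moreover have "X \<noteq> {}" using Xstar_ne unfolding X_def by auto
  ultimately obtain v where vX: "v \<in> X" and vd: "infdist (x k) X = dist (x k) v"
    using infdist_attains_inf by blast
  define d where "d = dist (x k) v"
  have d0: "d \<ge> 0" unfolding d_def by simp
  have Dp: "Dl k > 0" using gk by (rule Dl_pos)
  have grow: "\<mu> * d powr p \<le> Dl k"
    using growth[rule_format, of "x k"] vd unfolding d_def X_def Dl_def by simp
  have key: "\<rho> k * d^2 \<le> Dl k"
  proof (cases "d = 0")
    case True
    then show ?thesis using Dp by simp
  next
    case False
    then have dpos: "d > 0" using d0 by simp
    have "(\<mu> * d powr p) powr (2/p) \<le> Dl k powr (2/p)"
      using grow p_ge mu_pos dpos by (intro powr_mono2) auto
    moreover have "(\<mu> * d powr p) powr (2/p) = \<mu> powr (2/p) * d^2"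
      using p_ge mu_pos dpos by (simp add: powr_mult powr_powr)
    ultimately have A: "\<mu> powr (2/p) * d^2 \<le> Dl k powr (2/p)" by simp
    have "\<rho> k * d^2 = Dl k powr (1 - 2/p) * (\<mu> powr (2/p) * d^2)"
      using rho_def unfolding Dl_def by simp
    also have "\<dots> \<le> Dl k powr (1 - 2/p) * Dl k powr (2/p)"
      using A by (intro mult_left_mono) auto
    also have "\<dots> = Dl k" using Dp by (simp add: powr_add[symmetric])
    finally show ?thesis .
  qed
  have "fm k (z (Suc k)) + \<rho> k / 2 * (norm (z (Suc k) - x k))\<^sup>2 \<le> fm k v + \<rho> k / 2 * (norm (v - x k))\<^sup>2"
    using prox_step gk unfolding good_def Dl_def by blast
  also have "\<dots> \<le> fstar + \<rho> k / 2 * d^2"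
  proof -
    have "fm k v \<le> fstar" using below vX unfolding X_def by (metis mem_Collect_eq)
    then show ?thesis unfolding d_def by (simp add: dist_norm norm_minus_commute)
  qed
  finally show ?thesis using key unfolding G_def Dl_def by simp
qed

lemma start_bound:
  assumes gk: "good k" and lin: "\<forall>u. fm k u \<ge> f (x k) + inner h (u - x k)" and hM: "norm h \<le> M"
  shows "\<rho> k * G k \<le> M^2 / 2"
proof -
  have rp: "\<rho> k > 0" using gk by (rule rho_pos)
  define e where "e = z (Suc k) - x k"
  have "fm k (z (Suc k)) + \<rho> k / 2 * (norm e)\<^sup>2 \<ge> f (x k) + (1 * inner h e + \<rho> k / 2 * (norm e)\<^sup>2)"
    using lin[rule_format, of "z (Suc k)"] unfolding e_def by simp
  moreover have "1 * inner h e + \<rho> k / 2 * (norm e)\<^sup>2 \<ge> - (1^2 * (norm h)\<^sup>2 / (2 * \<rho> k))"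
    by (rule sq_lemma[OF rp])
  moreover have "(norm h)\<^sup>2 \<le> M^2" using hM by (simp add: power_mono)
  moreover have "(norm h)\<^sup>2 / (2 * \<rho> k) \<le> M^2 / (2 * \<rho> k)"
    using \<open>(norm h)\<^sup>2 \<le> M^2\<close> rp by (simp add: divide_right_mono)
  ultimately have "G k \<le> M^2 / (2 * \<rho> k)"
    unfolding G_def e_def by simp
  then show ?thesis using rp by (simp add: field_simps)
qed

lemma null_step:
  assumes gk: "good k" and nd: "\<not> D k" and below: "\<forall>u. fm k u \<le> f u"
    and rG: "\<rho> k * G k \<le> M^2 / 2"
  shows "x (Suc k) = x k" "good (Suc k)" "\<rho> (Suc k) = \<rho> k"
    "G (Suc k) \<le> G k - (1 - \<beta>)^2 * (G k)^2 * \<rho> k / (4 * M^2)"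
proof -
  have gk': "f (x k) - fstar > \<epsilon>" using gk unfolding good_def Dl_def .
  show xs: "x (Suc k) = x k" using null_update gk' nd by blast
  show gs: "good (Suc k)" using gk xs unfolding good_def Dl_def by simp
  show rs: "\<rho> (Suc k) = \<rho> k" using rho_def xs by simp
  define xx zz w r where "xx = x k" and "zz = z (Suc k)" and "w = z (Suc (Suc k))" and "r = \<rho> k"
  define d e gg where "d = zz - xx" and "e = w - zz" and "gg = g zz"
  define GG where "GG = G k"
  have rp: "r > 0" unfolding r_def using gk by (rule rho_pos)
  have GG0: "GG \<ge> 0" using gap[OF gk below] Dl_pos[OF gk] unfolding GG_def by simp
  have Gdef: "GG = f xx - (fm k zz + r / 2 * (norm d)\<^sup>2)"
    unfolding GG_def G_def xx_def zz_def r_def d_def ..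
  have "\<not> \<beta> * (f xx - fm k zz) \<le> f xx - f zz"
    using nd unfolding pbm_descent_def xx_def zz_def .
  then have n0: "\<beta> * (f xx - fm k zz) > f xx - f zz" by simp
  have "(1 - \<beta>) * (f xx - fm k zz) = (f xx - fm k zz) - \<beta> * (f xx - fm k zz)"
    by (simp add: algebra_simps)
  then have n1: "f zz - fm k zz \<ge> (1 - \<beta>) * (f xx - fm k zz)" using n0 by linarith
  have n2: "f xx - fm k zz = GG + r / 2 * (norm d)\<^sup>2" using Gdef by simp
  have N: "f zz - fm k zz \<ge> (1 - \<beta>) * (GG + r / 2 * (norm d)\<^sup>2)"
    using n1 unfolding n2 .
  define a where "a = (1 - \<beta>) * GG * r / (2 * M^2)"
  have a0: "a \<ge> 0" unfolding a_def using beta GG0 rp by simp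
  have "GG * r / (2 * M^2) \<le> 1 / 4" using rG M_pos unfolding GG_def r_def by (simp add: field_simps)
  moreover have "a = (1 - \<beta>) * (GG * r / (2 * M^2))" unfolding a_def by simp
  moreover have "GG * r / (2 * M^2) \<ge> 0" using GG0 rp by simp
  moreover have "(1 - \<beta>) * (GG * r / (2 * M^2)) \<le> 1 * (GG * r / (2 * M^2))"
    using beta GG0 rp by (intro mult_right_mono) auto
  ultimately have a1: "a \<le> 1" by linarith
  have agg0: "fm (Suc k) w \<ge> fm k zz + inner (r *\<^sub>R (xx - zz)) e"
    using model_agg gk' nd unfolding xx_def zz_def w_def r_def e_def by blast
  have "xx - zz = - d" unfolding d_def by simp
  then have "inner (r *\<^sub>R (xx - zz)) e = - (r * inner d e)" by simp
  then have agg: "fm (Suc k) w \<ge> fm k zz - r * inner d e" using agg0 by simp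
  have cut: "fm (Suc k) w \<ge> f zz + inner gg e"
    using model_cut gk' unfolding zz_def w_def e_def gg_def by blast
  define S where "S = a * (inner gg e + r * inner d e) + r / 2 * (norm e)\<^sup>2"
  have "S = a * inner (gg + r *\<^sub>R d) e + r / 2 * (norm e)\<^sup>2"
    unfolding S_def by (simp add: inner_add_left)
  then have Sb: "S \<ge> - (a^2 * (norm (gg + r *\<^sub>R d))\<^sup>2 / (2 * r))"
    using sq_lemma[OF rp] by simp
  have "(norm (gg + r *\<^sub>R d))\<^sup>2 \<le> 2 * (norm gg)\<^sup>2 + 2 * (norm (r *\<^sub>R d))\<^sup>2" by (rule norm_add_sq_le)
  moreover have "(norm gg)\<^sup>2 \<le> M^2" unfolding gg_def using g_norm by (simp add: power_mono)
  moreover have "(norm (r *\<^sub>R d))\<^sup>2 = r^2 * (norm d)\<^sup>2" using rp by (simp add: power_mult_distrib)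
  ultimately have H: "(norm (gg + r *\<^sub>R d))\<^sup>2 \<le> 2 * M^2 + 2 * r^2 * (norm d)\<^sup>2" by simp
  have W: "(norm (w - xx))\<^sup>2 = (norm e)\<^sup>2 + 2 * inner d e + (norm d)\<^sup>2"
  proof -
    have "w - xx = e + d" unfolding e_def d_def by simp
    then show ?thesis by (simp add: norm_add_sq inner_commute)
  qed
  have main: "fm (Suc k) w + r / 2 * (norm (w - xx))\<^sup>2 \<ge> fm k zz + r / 2 * (norm d)\<^sup>2
      + a * (f zz - fm k zz) - a^2 * M^2 / r - a^2 * r * (norm d)\<^sup>2"
    by (rule comb_lemma[OF agg cut a0 a1 rp S_def Sb H W])
  have ar: "a * (f zz - fm k zz) - a^2 * M^2 / r - a^2 * r * (norm d)\<^sup>2 \<ge> (1 - \<beta>)^2 * GG^2 * r / (4 * M^2)"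
    by (rule arith_null[OF rp M_pos beta GG0 _ _ N a_def]) (use rG in \<open>auto simp: GG_def r_def\<close>)
  have "G (Suc k) = f xx - (fm (Suc k) w + r / 2 * (norm (w - xx))\<^sup>2)"
    unfolding G_def xs rs xx_def w_def r_def ..
  then show "G (Suc k) \<le> G k - (1 - \<beta>)^2 * (G k)^2 * \<rho> k / (4 * M^2)"
    using main ar Gdef unfolding GG_def r_def by linarith
qed

lemma desc_step:
  assumes gk: "good k" and dk: "D k" and below: "\<forall>u. fm k u \<le> f u"
  shows "x (Suc k) = z (Suc k)" "Dl (Suc k) \<le> (1 - \<beta> / 2) * Dl k"
    "good (Suc k) \<Longrightarrow> \<rho> (Suc k) * G (Suc k) \<le> M^2 / 2"
proof -
  have gk': "f (x k) - fstar > \<epsilon>" using gk unfolding good_def Dl_def .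
  show xs: "x (Suc k) = z (Suc k)" using descent_update gk' dk by blast
  have g1: "G k \<ge> Dl k / 2" by (rule gap[OF gk below])
  have g2: "f (x k) - fm k (z (Suc k)) \<ge> G k" unfolding G_def using rho_pos[OF gk] by simp
  have d: "\<beta> * (f (x k) - fm k (z (Suc k))) \<le> f (x k) - f (z (Suc k))"
    using dk unfolding pbm_descent_def .
  have "\<beta> * (Dl k / 2) \<le> \<beta> * (f (x k) - fm k (z (Suc k)))"
    using g1 g2 beta by (intro mult_left_mono) auto
  then have "\<beta> * (Dl k / 2) \<le> f (x k) - f (z (Suc k))" using d by linarith
  then show "Dl (Suc k) \<le> (1 - \<beta> / 2) * Dl k" unfolding Dl_def xs by (simp add: algebra_simps)
  assume gs: "good (Suc k)"
  show "\<rho> (Suc k) * G (Suc k) \<le> M^2 / 2"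
  proof (rule start_bound[OF gs _ g_norm])
    show "\<forall>u. f (x (Suc k)) + inner (g (z (Suc k))) (u - x (Suc k)) \<le> fm (Suc k) u"
      using model_cut gk' xs by simp
  qed
qed

definition "Bc = 8 * M^2 / ((1 - \<beta>)^2 * \<mu> powr (2 / p))"
definition "q = 2 - 2 / p"
definition "rr = (1 - \<beta> / 2) powr q"
definition "ell k = 4 * M^2 / ((1 - \<beta>)^2 * \<rho> k * G k)"
definition "desc N = card {k. k < N \<and> D k}"
definition "nul N = card {k. k < N \<and> \<not> D k}"
definition "Wt k = (if p > 1 then Bc / Dl k powr q * rr / (1 - rr) else Bc * desc k)"

lemma Bc_nonneg: "Bc \<ge> 0" unfolding Bc_def by simp

lemma rr_bounds: "p > 1 \<Longrightarrow> 0 < rr \<and> rr < 1"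
proof -
  assume "p > 1"
  then have qp: "q > 0" unfolding q_def by (simp add: field_simps)
  have "(1 - \<beta> / 2) powr q < 1 powr q" using beta qp by (intro powr_less_mono2) auto
  then show ?thesis using beta unfolding rr_def by simp
qed

lemma ell_bound:
  assumes gk: "good k" and below: "\<forall>u. fm k u \<le> f u"
  shows "ell k \<le> Bc / Dl k powr q" "ell k > 0"
proof -
  have g1: "G k \<ge> Dl k / 2" by (rule gap[OF gk below])
  have Dp: "Dl k > 0" using gk by (rule Dl_pos)
  have rp: "\<rho> k > 0" using gk by (rule rho_pos)
  have b: "(1 - \<beta>)^2 > 0" using beta by simp
  have Gp: "G k > 0" using g1 Dp by simp
  show "ell k > 0" unfolding ell_def using M_pos b rp Gp by simp
  have "ell k \<le> 4 * M^2 / ((1 - \<beta>)^2 * \<rho> k * (Dl k / 2))"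
    unfolding ell_def using M_pos b rp g1 Dp
    by (intro divide_left_mono mult_left_mono mult_pos_pos) auto
  also have "\<dots> = 8 * M^2 / ((1 - \<beta>)^2 * (\<rho> k * Dl k))" by (simp add: field_simps)
  also have "\<dots> = Bc / Dl k powr q" unfolding rho_Dl[OF gk] Bc_def q_def by (simp add: field_simps)
  finally show "ell k \<le> Bc / Dl k powr q" .
qed

lemma ell_null:
  assumes gk: "good k" and nd: "\<not> D k" and below: "\<forall>u. fm k u \<le> f u"
    and rG: "\<rho> k * G k \<le> M^2 / 2"
  shows "ell (Suc k) \<ge> ell k + 1"
proof -
  note ns = null_step[OF gk nd below rG]
  have gk': "f (x k) - fstar > \<epsilon>" using gk unfolding good_def Dl_def .
  have below': "\<forall>u. fm (Suc k) u \<le> f u" using model_below gk' by blast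
  have Gp: "G k > 0" using gap[OF gk below] Dl_pos[OF gk] by simp
  have Gp': "G (Suc k) > 0" using gap[OF ns(2) below'] Dl_pos[OF ns(2)] by simp
  have rp: "\<rho> k > 0" using gk by (rule rho_pos)
  define c where "c = (1 - \<beta>)^2 * \<rho> k / (4 * M^2)"
  have cp: "c > 0" unfolding c_def using beta rp M_pos by simp
  have "G (Suc k) \<le> G k - c * (G k)^2" using ns(4) unfolding c_def by (simp add: field_simps)
  then have "1 / (c * G (Suc k)) \<ge> 1 / (c * G k) + 1" by (rule recip_step[OF Gp cp Gp'])
  moreover have "ell k = 1 / (c * G k)" "ell (Suc k) = 1 / (c * G (Suc k))"
    unfolding ell_def c_def ns(3) using M_pos by (simp_all add: field_simps)
  ultimately show ?thesis by simp
qed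

lemma Wt_nonneg: "good k \<Longrightarrow> Wt k \<ge> 0"
proof -
  assume gk: "good k"
  show ?thesis
  proof (cases "p > 1")
    case True
    then show ?thesis unfolding Wt_def using rr_bounds[OF True] Bc_nonneg Dl_pos[OF gk] by simp
  next
    case False
    then show ?thesis unfolding Wt_def using Bc_nonneg by simp
  qed
qed

lemma inv:
  "(\<forall>j\<le>N. good j) \<Longrightarrow> \<rho> N * G N \<le> M^2 / 2 \<and> Dl N \<le> (1 - \<beta> / 2) ^ desc N * Dl 0
     \<and> real (nul N) \<le> Wt N + ell N"
proof (induction N)
  case 0
  then have g0: "good 0" by simp
  have "\<rho> 0 * G 0 \<le> M^2 / 2" using start_bound[OF g0 _ g_norm[of "x 0"]] fm0 by simp
  moreover have "real (nul 0) \<le> Wt 0 + ell 0"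
    using Wt_nonneg[OF g0] ell_bound(2)[OF g0] fm_below[of 0] 0 unfolding nul_def by simp
  ultimately show ?case unfolding desc_def by simp
next
  case (Suc N)
  then have allN: "\<forall>j\<le>N. good j" and gN: "good N" and gS: "good (Suc N)" by auto
  note IH = Suc.IH[OF allN]
  have below: "\<forall>u. fm N u \<le> f u" using fm_below[OF allN] by blast
  have belowS: "\<forall>u. fm (Suc N) u \<le> f u" using fm_below[OF Suc.prems] by blast
  have eb: "ell N \<le> Bc / Dl N powr q" by (rule ell_bound(1)[OF gN below])
  have eS: "ell (Suc N) > 0" by (rule ell_bound(2)[OF gS belowS])
  show ?case
  proof (cases "D N")
    case True
    note ds = desc_step[OF gN True below]
    have dS: "desc (Suc N) = desc N + 1" "nul (Suc N) = nul N"
      unfolding desc_def nul_def using True by (simp_all add: card_Suc_filter)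
    have rG: "\<rho> (Suc N) * G (Suc N) \<le> M^2 / 2" by (rule ds(3)[OF gS])
    have "Dl (Suc N) \<le> (1 - \<beta> / 2) * ((1 - \<beta> / 2) ^ desc N * Dl 0)"
  proof -
      have "(1 - \<beta> / 2) * Dl N \<le> (1 - \<beta> / 2) * ((1 - \<beta> / 2) ^ desc N * Dl 0)"
        using IH beta by (intro mult_left_mono) auto
      then show ?thesis using ds(2) by linarith
    qed
    then have dl: "Dl (Suc N) \<le> (1 - \<beta> / 2) ^ desc (Suc N) * Dl 0" unfolding dS by simp
    have DpN: "Dl N > 0" and DpS: "Dl (Suc N) > 0" using Dl_pos gN gS by auto
    have "Wt N + Bc / Dl N powr q \<le> Wt (Suc N)"
    proof (cases "p > 1")
      case True
      note rb = rr_bounds[OF True]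
      have qp: "q \<ge> 0" unfolding q_def using p_ge by (simp add: field_simps)
      have "Dl (Suc N) powr q \<le> ((1 - \<beta> / 2) * Dl N) powr q"
        using ds(2) DpS qp by (intro powr_mono2) auto
      also have "\<dots> = rr * Dl N powr q" unfolding rr_def using beta DpN by (simp add: powr_mult)
      finally have le: "Dl (Suc N) powr q \<le> rr * Dl N powr q" .
      define Y where "Y = Bc / Dl N powr q"
      define Y' where "Y' = Bc / Dl (Suc N) powr q"
      have "Bc / (rr * Dl N powr q) \<le> Y'"
        unfolding Y'_def using le DpS DpN rb Bc_nonneg by (intro divide_left_mono) auto
      then have YY: "Y / rr \<le> Y'" unfolding Y_def by (simp add: field_simps)
      have "Wt N = Y * rr / (1 - rr)" unfolding Wt_def Y_def using True by simp
      moreover have "Y * rr / (1 - rr) + Y = (Y / rr) * rr / (1 - rr)"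
        using rb by (simp add: field_simps)
      ultimately have "Wt N + Y = (Y / rr) * rr / (1 - rr)" by simp
      also have "\<dots> \<le> Y' * rr / (1 - rr)"
        using YY rb by (intro divide_right_mono mult_right_mono) auto
      also have "\<dots> = Wt (Suc N)" unfolding Wt_def Y'_def using True by simp
      finally show ?thesis unfolding Y_def .
    next
      case False
      then have "p = 1" using p_ge by simp
      then have "q = 0" unfolding q_def by simp
      then show ?thesis unfolding Wt_def dS using False DpN by (simp add: algebra_simps)
    qed
    then have "real (nul (Suc N)) \<le> Wt (Suc N) + ell (Suc N)"
      using IH eb eS unfolding dS by linarith
    then show ?thesis using rG dl by simp
  next
    case False
    note ns = null_step[OF gN False below conjunct1[OF IH]]
    have dS: "desc (Suc N) = desc N" "nul (Suc N) = nul N + 1"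
      unfolding desc_def nul_def using False by (simp_all add: card_Suc_filter)
    have en: "ell (Suc N) \<ge> ell N + 1" by (rule ell_null[OF gN False below conjunct1[OF IH]])
    have DlS: "Dl (Suc N) = Dl N" unfolding Dl_def ns(1) ..
    have WS: "Wt (Suc N) = Wt N" unfolding Wt_def DlS dS ..
    have "(1 - \<beta>)^2 * (G N)^2 * \<rho> N / (4 * M^2) \<ge> 0" using rho_pos[OF gN] by simp
    then have "G (Suc N) \<le> G N" using ns(4) by linarith
    then have "\<rho> (Suc N) * G (Suc N) \<le> \<rho> N * G N"
      unfolding ns(3) using rho_pos[OF gN] by (simp add: mult_left_mono)
    then show ?thesis using IH en DlS WS dS by simp
  qed
qed

lemma desc_nul: "desc N + nul N = N"
  by (induction N) (auto simp: desc_def nul_def card_Suc_filter)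

definition "Lc = 2 * ln (Dl 0 / \<epsilon>) / \<beta>"

lemma desc_bound: "(\<forall>j\<le>N. good j) \<Longrightarrow> real (desc N) < Lc"
proof -
  assume all: "\<forall>j\<le>N. good j"
  define n where "n = desc N"
  have "\<epsilon> < Dl N" using all unfolding good_def by simp
  also have "\<dots> \<le> (1 - \<beta> / 2) ^ n * Dl 0" using inv[OF all] unfolding n_def by simp
  finally have lt: "\<epsilon> < (1 - \<beta> / 2) ^ n * Dl 0" .
  have b2: "1 - \<beta> / 2 > 0" using beta by simp
  have D0: "Dl 0 > 0" using eps unfolding Dl_def by simp
  have "ln \<epsilon> < ln ((1 - \<beta> / 2) ^ n * Dl 0)" using lt eps by simp
  also have "\<dots> = real n * ln (1 - \<beta> / 2) + ln (Dl 0)" using b2 D0 by (simp add: ln_mult ln_realpow)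
  also have "real n * ln (1 - \<beta> / 2) \<le> real n * (- \<beta> / 2)"
    using ln_le_minus_one[OF b2] by (intro mult_left_mono) auto
  finally have "real n * \<beta> / 2 < ln (Dl 0) - ln \<epsilon>" by simp
  also have "\<dots> = ln (Dl 0 / \<epsilon>)" using D0 eps by (simp add: ln_div)
  finally show ?thesis unfolding Lc_def n_def using beta by (simp add: field_simps)
qed

lemma nul_bound:
  assumes all: "\<forall>j\<le>N. good j"
  shows "real (nul N) \<le> (if p > 1 then Bc / \<epsilon> powr q / (1 - rr) else Bc * (real (desc N) + 1))"
proof -
  have gN: "good N" using all by simp
  have below: "\<forall>u. fm N u \<le> f u" using fm_below[OF all] by blast
  have n1: "real (nul N) \<le> Wt N + Bc / Dl N powr q"
    using inv[OF all] ell_bound(1)[OF gN below] by linarith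
  have DpN: "Dl N > \<epsilon>" using gN unfolding good_def .
  show ?thesis
  proof (cases "p > 1")
    case True
    note rb = rr_bounds[OF True]
    have qp: "q \<ge> 0" unfolding q_def using p_ge by (simp add: field_simps)
    define Y where "Y = Bc / Dl N powr q"
    have "Wt N = Y * rr / (1 - rr)" unfolding Wt_def Y_def using True by simp
    moreover have "Y * rr / (1 - rr) + Y = Y / (1 - rr)" using rb by (simp add: field_simps)
    ultimately have "Wt N + Bc / Dl N powr q = Bc / Dl N powr q / (1 - rr)" unfolding Y_def by simp
    also have "\<dots> \<le> Bc / \<epsilon> powr q / (1 - rr)"
    proof -
      have "\<epsilon> powr q \<le> Dl N powr q" using DpN eps qp by (intro powr_mono2) auto
      then have "Bc / Dl N powr q \<le> Bc / \<epsilon> powr q"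
        using Bc_nonneg eps DpN by (intro divide_left_mono) auto
      then show ?thesis using rb by (intro divide_right_mono) auto
    qed
    finally show ?thesis using n1 True by simp
  next
    case False
    then have "q = 0" unfolding q_def using p_ge by simp
    then show ?thesis using n1 False Dl_pos[OF gN] unfolding Wt_def by (simp add: algebra_simps)
  qed
qed

lemma exists_bad: "\<exists>K. \<not> good K"
proof (rule ccontr)
  assume "\<not> (\<exists>K. \<not> good K)"
  then have all: "\<And>N. \<forall>j\<le>N. good j" by simp
  define C where "C = (if p > 1 then Bc / \<epsilon> powr q / (1 - rr) else Bc * (Lc + 1))"
  have bnd: "real N < Lc + C" for N
  proof -
    have d: "real (desc N) < Lc" by (rule desc_bound[OF all])
    have "real (nul N) \<le> C"
    proof (cases "p > 1")
      case True then show ?thesis using nul_bound[OF all, of N] unfolding C_def by simp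
    next
      case False
      have "Bc * (real (desc N) + 1) \<le> Bc * (Lc + 1)"
        using d Bc_nonneg by (intro mult_left_mono) auto
      then show ?thesis using nul_bound[OF all, of N] False unfolding C_def by simp
    qed
    then show ?thesis using d desc_nul[of N] by (metis add_less_le_mono of_nat_add)
  qed
  define N where "N = nat \<lceil>Lc + C\<rceil>"
  have "Lc + C \<le> real N" unfolding N_def by linarith
  then show False using bnd[of N] by simp
qed

lemma main:
  "\<exists>K. f (x K) - fstar \<le> \<epsilon> \<and> (\<forall>k<K. f (x k) - fstar > \<epsilon>)
     \<and> int (card {k. k < K \<and> pbm_descent \<beta> f fm x z k})
          \<le> \<lceil>2 * ln ((f (x 0) - fstar) / \<epsilon>) / \<beta>\<rceil>
     \<and> real (card {k. k < K \<and> \<not> pbm_descent \<beta> f fm x z k})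
          \<le> (if p > 1
              then (1 / (1 - (1 - \<beta> / 2) powr (2 - 2 / p)))
                   * (8 * M\<^sup>2 / ((1 - \<beta>)\<^sup>2 * \<mu> powr (2 / p) * \<epsilon> powr (2 - 2 / p)))
              else 8 * M\<^sup>2 / ((1 - \<beta>)\<^sup>2 * \<mu>\<^sup>2)
                   * real_of_int \<lceil>2 * ln ((f (x 0) - fstar) / \<epsilon>) / \<beta>\<rceil>)"
proof -
  define K where "K = (LEAST K. \<not> good K)"
  have bad: "\<not> good K" unfolding K_def using exists_bad by (metis LeastI_ex)
  have before: "\<forall>k<K. good k" unfolding K_def using not_less_Least by blast
  have L: "2 * ln ((f (x 0) - fstar) / \<epsilon>) / \<beta> = Lc" unfolding Lc_def Dl_def ..
  have RHS: "(if p > 1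
              then (1 / (1 - (1 - \<beta> / 2) powr (2 - 2 / p)))
                   * (8 * M\<^sup>2 / ((1 - \<beta>)\<^sup>2 * \<mu> powr (2 / p) * \<epsilon> powr (2 - 2 / p)))
              else 8 * M\<^sup>2 / ((1 - \<beta>)\<^sup>2 * \<mu>\<^sup>2)
                   * real_of_int \<lceil>2 * ln ((f (x 0) - fstar) / \<epsilon>) / \<beta>\<rceil>)
     = (if p > 1 then Bc / \<epsilon> powr q / (1 - rr) else Bc * real_of_int \<lceil>Lc\<rceil>)"
  proof (cases "p > 1")
    case True
    then show ?thesis unfolding L Bc_def rr_def q_def by (simp add: divide_divide_eq_left)
  next
    case False
    then have "p = 1" using p_ge by simp
    then show ?thesis unfolding L Bc_def using mu_pos by simp
  qed
  have Lc0: "Lc \<ge> 0" unfolding Lc_def using eps beta by (simp add: Dl_def)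
  have ineqs: "int (desc K) \<le> \<lceil>Lc\<rceil> \<and>
     real (nul K) \<le> (if p > 1 then Bc / \<epsilon> powr q / (1 - rr) else Bc * real_of_int \<lceil>Lc\<rceil>)"
  proof (cases K)
    case 0
    have "Bc / \<epsilon> powr q / (1 - rr) \<ge> 0" if "p > 1"
      using rr_bounds[OF that] Bc_nonneg by simp
    moreover have "Bc * real_of_int \<lceil>Lc\<rceil> \<ge> 0" using Bc_nonneg Lc0 by simp
    ultimately show ?thesis using 0 Lc0 unfolding desc_def nul_def by simp
  next
    case (Suc N)
    have all: "\<forall>j\<le>N. good j" using before Suc by auto
    have gN: "good N" using all by simp
    have dN: "D N"
    proof (rule ccontr)
      assume "\<not> D N"
      then have "x (Suc N) = x N" using null_update gN unfolding good_def Dl_def by blast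
      then have "good (Suc N)" using gN unfolding good_def Dl_def by simp
      then show False using bad Suc by simp
    qed
    have dS: "desc K = desc N + 1" "nul K = nul N"
      unfolding desc_def nul_def Suc using dN by (simp_all add: card_Suc_filter)
    have db: "real (desc N) < Lc" by (rule desc_bound[OF all])
    then have "int (desc N) < \<lceil>Lc\<rceil>" by (simp add: less_ceiling_iff)
    then have dK: "int (desc K) \<le> \<lceil>Lc\<rceil>" unfolding dS by simp
    have "real (nul K) \<le> (if p > 1 then Bc / \<epsilon> powr q / (1 - rr) else Bc * real_of_int \<lceil>Lc\<rceil>)"
    proof (cases "p > 1")
      case True
      then show ?thesis using nul_bound[OF all] unfolding dS by simp
    next
      case False
      have "real (desc K) \<le> real_of_int \<lceil>Lc\<rceil>" using dK by linarith
      then have "Bc * (real (desc N) + 1) \<le> Bc * real_of_int \<lceil>Lc\<rceil>"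
        using Bc_nonneg unfolding dS by (intro mult_left_mono) auto
      then show ?thesis using nul_bound[OF all] False unfolding dS by simp
    qed
    then show ?thesis using dK by simp
  qed
  show ?thesis
    apply (rule exI[of _ K])
    using bad before ineqs RHS L unfolding good_def Dl_def desc_def nul_def by simp
qed

end

theorem theorem6:
  fixes f :: "'a::euclidean_space \<Rightarrow> real"
    and g :: "'a \<Rightarrow> 'a"
    and fstar M \<mu> p \<beta> \<epsilon> :: real
    and x z :: "nat \<Rightarrow> 'a"
    and fm :: "nat \<Rightarrow> 'a \<Rightarrow> real"
    and \<rho> :: "nat \<Rightarrow> real"
  assumes convex: "convex_on UNIV f"
    and lipschitz: "\<forall>u v. \<bar>f u - f v\<bar> \<le> M * norm (u - v)"
    and fstar_lb: "\<forall>u. fstar \<le> f u"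
    and Xstar_ne: "\<exists>u. f u = fstar"
    and mu_pos: "\<mu> > 0" and p_ge: "p \<ge> 1"
    and growth: "\<forall>u. f u - fstar \<ge> \<mu> * (infdist u {v. f v = fstar}) powr p"
    and subgrad_oracle: "\<forall>u. is_subgradient f u (g u)"
    and beta: "0 < \<beta>" "\<beta> < 1"
    and x0: "z 0 = x 0"
    and fm0: "\<forall>u. fm 0 u = f (x 0) + inner (g (x 0)) (u - x 0)"
    and rho_def: "\<forall>k. \<rho> k = \<mu> powr (2 / p) * (f (x k) - fstar) powr (1 - 2 / p)"
    and models_convex: "\<forall>k. f (x k) - fstar > \<epsilon> \<longrightarrow> convex_on UNIV (fm k)"
    and prox_step: "\<forall>k. f (x k) - fstar > \<epsilon> \<longrightarrow>
        (\<forall>u. fm k (z (Suc k)) + \<rho> k / 2 * (norm (z (Suc k) - x k))\<^sup>2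
              \<le> fm k u + \<rho> k / 2 * (norm (u - x k))\<^sup>2)"
    and descent_update: "\<forall>k. f (x k) - fstar > \<epsilon> \<longrightarrow> pbm_descent \<beta> f fm x z k \<longrightarrow> x (Suc k) = z (Suc k)"
    and null_update: "\<forall>k. f (x k) - fstar > \<epsilon> \<longrightarrow> \<not> pbm_descent \<beta> f fm x z k \<longrightarrow> x (Suc k) = x k"
    and model_below: "\<forall>k. f (x k) - fstar > \<epsilon> \<longrightarrow> (\<forall>u. fm (Suc k) u \<le> f u)"
    and model_cut: "\<forall>k. f (x k) - fstar > \<epsilon> \<longrightarrow>
        (\<forall>u. fm (Suc k) u \<ge> f (z (Suc k)) + inner (g (z (Suc k))) (u - z (Suc k)))"
    and model_agg: "\<forall>k. f (x k) - fstar > \<epsilon> \<longrightarrow> \<not> pbm_descent \<beta> f fm x z k \<longrightarrow>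
        (\<forall>u. fm (Suc k) u \<ge> fm k (z (Suc k)) + inner (\<rho> k *\<^sub>R (x k - z (Suc k))) (u - z (Suc k)))"
    and eps: "0 < \<epsilon>" "\<epsilon> \<le> f (x 0) - fstar"
  shows "\<exists>K. f (x K) - fstar \<le> \<epsilon> \<and> (\<forall>k<K. f (x k) - fstar > \<epsilon>)
     \<and> int (card {k. k < K \<and> pbm_descent \<beta> f fm x z k})
          \<le> \<lceil>2 * ln ((f (x 0) - fstar) / \<epsilon>) / \<beta>\<rceil>
     \<and> real (card {k. k < K \<and> \<not> pbm_descent \<beta> f fm x z k})
          \<le> (if p > 1
              then (1 / (1 - (1 - \<beta> / 2) powr (2 - 2 / p)))
                   * (8 * M\<^sup>2 / ((1 - \<beta>)\<^sup>2 * \<mu> powr (2 / p) * \<epsilon> powr (2 - 2 / p)))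
              else 8 * M\<^sup>2 / ((1 - \<beta>)\<^sup>2 * \<mu>\<^sup>2)
                   * real_of_int \<lceil>2 * ln ((f (x 0) - fstar) / \<epsilon>) / \<beta>\<rceil>)"
proof -
  interpret pbm f g fstar M \<mu> p \<beta> \<epsilon> x z fm \<rho>
    by (rule pbm.intro[OF lipschitz fstar_lb Xstar_ne mu_pos p_ge growth subgrad_oracle beta fm0
          rho_def prox_step descent_update null_update model_below model_cut model_agg eps])
  show ?thesis by (rule main)
qed

end
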